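(* Let $\mathcal{H}$ be an $n$-dimensional (real or complex) Hilbert space, let $F=\{f_i\}_{i=1}^N$ be a frame for $\mathcal{H}$, and let $\{q_i\}_{i=1}^N$ be the weight number sequence associated with a probability sequence $\{p_i\}_{i=1}^N$. Then the set $\Delta_F^{(1)}$ of all 1-erasure probabilistic averaged spectrally optimal dual frames (PASOD-frames) of $F$ is convex.
   Context: A finite sequence $F=\{f_i\}_{i=1}^N$ in $\mathcal{H}$ is a frame if there are $A,B>0$ with $A\|f\|^2\le\sum_{i=1}^N|\langle f,f_i\rangle|^2\le B\|f\|^2$ for all $f\in\mathcal{H}$. A frame $G=\{g_i\}_{i=1}^N$ is a dual frame of $F$ if $f=\sum_{i=1}^N\langle f,f_i\rangle g_i=\sum_{i=1}^N\langle f,g_i\rangle f_i$ for all $f\in\mathcal{H}$. A probability sequence is $\{p_i\}_{i=1}^N$ with $0\le p_i\le 1$ and $\sum_{i=1}^N p_i=1$; its weight numbers are $q_i=\frac{\sum_{j=1}^N p_j}{\sum_{j=1}^N p_j-p_i}\cdot\frac{N-1}{n}$. For $\Lambda\subseteq\{1,\dots,N\}$ and a dual $G$ of $F$, the error operator is $E_{\Lambda,(F,G)}f=\sum_{i\in\Lambda}q_i\langle f,f_i\rangle g_i$. Define $\mathcal{A}_P^{(1)}(F,G)=\max_{|\Lambda|=1}\frac{\|E_{\Lambda,(F,G)}\|+\rho(E_{\Lambda,(F,G)})}{2}$, where $\|\cdot\|$ is the operator norm and $\rho$ the spectral radius, and $\mathcal{A}_P^{(1)}(F)=\inf\{\mathcal{A}_P^{(1)}(F,G):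 G \text{ a dual of } F\}$. A dual $G$ of $F$ is a 1-erasure PASOD-frame of $F$ if $\mathcal{A}_P^{(1)}(F,G)=\mathcal{A}_P^{(1)}(F)$; $\Delta_F^{(1)}$ denotes the set of these. *)

theory Defs
  imports Complex_Main "Jordan_Normal_Form.Spectral_Radius"
begin

text \<open>The n-dimensional Hilbert space H over the scalar field K (K = Reals for the real
  case, K = UNIV for the complex case) is modelled as the K-valued vectors of dimension n,
  embedded in complex n-vectors, with the standard inner product.\<close>

definition hspace :: "complex set \<Rightarrow> nat \<Rightarrow> complex vec set" where
  "hspace K n = {f. f \<in> carrier_vec n \<and> (\<forall>j<n. f $ j \<in> K)}"

definition hinner :: "nat \<Rightarrow> complex vec \<Rightarrow> complex vec \<Rightarrow> complex" where
  "hinner n f g = (\<Sum>j<n. f $ j * cnj (g $ j))"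

definition hnorm :: "nat \<Rightarrow> complex vec \<Rightarrow> real" where
  "hnorm n f = sqrt (\<Sum>j<n. (cmod (f $ j))\<^sup>2)"

text \<open>Finite sequences are indexed by {1..N}.\<close>
definition is_frame :: "complex set \<Rightarrow> nat \<Rightarrow> nat \<Rightarrow> (nat \<Rightarrow> complex vec) \<Rightarrow> bool" where
  "is_frame K n N F \<longleftrightarrow> (\<forall>i\<in>{1..N}. F i \<in> hspace K n) \<and>
     (\<exists>A B. A > 0 \<and> B > 0 \<and> (\<forall>f\<in>hspace K n.
        A * (hnorm n f)\<^sup>2 \<le> (\<Sum>i=1..N. (cmod (hinner n f (F i)))\<^sup>2) \<and>
        (\<Sum>i=1..N. (cmod (hinner n f (F i)))\<^sup>2) \<le> B * (hnorm n f)\<^sup>2))"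

definition vsum :: "nat \<Rightarrow> nat set \<Rightarrow> (nat \<Rightarrow> complex vec) \<Rightarrow> complex vec" where
  "vsum n I v = vec n (\<lambda>j. \<Sum>i\<in>I. v i $ j)"

definition is_dual :: "complex set \<Rightarrow> nat \<Rightarrow> nat \<Rightarrow> (nat \<Rightarrow> complex vec) \<Rightarrow> (nat \<Rightarrow> complex vec) \<Rightarrow> bool" where
  "is_dual K n N F G \<longleftrightarrow> is_frame K n N G \<and>
     (\<forall>f\<in>hspace K n. f = vsum n {1..N} (\<lambda>i. hinner n f (F i) \<cdot>\<^sub>v G i) \<and>
                     f = vsum n {1..N} (\<lambda>i. hinner n f (G i) \<cdot>\<^sub>v F i))"

definition is_prob_seq :: "nat \<Rightarrow> (nat \<Rightarrow> real) \<Rightarrow> bool" where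
  "is_prob_seq N p \<longleftrightarrow> (\<forall>i\<in>{1..N}. 0 \<le> p i \<and> p i \<le> 1) \<and> (\<Sum>i=1..N. p i) = 1"

definition weight :: "nat \<Rightarrow> nat \<Rightarrow> (nat \<Rightarrow> real) \<Rightarrow> nat \<Rightarrow> real" where
  "weight n N p i = (\<Sum>j=1..N. p j) / ((\<Sum>j=1..N. p j) - p i) * ((real N - 1) / real n)"

text \<open>Error operator E_{Lambda,(F,G)} as an n x n matrix: E f = sum_{i in Lambda} q_i <f,f_i> g_i.\<close>
definition err_op :: "nat \<Rightarrow> nat \<Rightarrow> (nat \<Rightarrow> real) \<Rightarrow> nat set \<Rightarrow> (nat \<Rightarrow> complex vec) \<Rightarrow> (nat \<Rightarrow> complex vec) \<Rightarrow> complex mat" where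
  "err_op n N p \<Lambda> F G = mat n n (\<lambda>(j,k). \<Sum>i\<in>\<Lambda>. complex_of_real (weight n N p i) * G i $ j * cnj (F i $ k))"

definition op_norm :: "complex set \<Rightarrow> nat \<Rightarrow> complex mat \<Rightarrow> real" where
  "op_norm K n E = Sup {hnorm n (E *\<^sub>v f) | f. f \<in> hspace K n \<and> hnorm n f \<le> 1}"

definition AP1 :: "complex set \<Rightarrow> nat \<Rightarrow> nat \<Rightarrow> (nat \<Rightarrow> real) \<Rightarrow> (nat \<Rightarrow> complex vec) \<Rightarrow> (nat \<Rightarrow> complex vec) \<Rightarrow> real" where
  "AP1 K n N p F G = Max {(op_norm K n (err_op n N p \<Lambda> F G) + spectral_radius (err_op n N p \<Lambda> F G)) / 2
                          | \<Lambda>. \<Lambda> \<subseteq> {1..N} \<and> card \<Lambda> = 1}"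

definition AP1_inf :: "complex set \<Rightarrow> nat \<Rightarrow> nat \<Rightarrow> (nat \<Rightarrow> real) \<Rightarrow> (nat \<Rightarrow> complex vec) \<Rightarrow> real" where
  "AP1_inf K n N p F = Inf {AP1 K n N p F G | G. is_dual K n N F G}"

definition PASOD1 :: "complex set \<Rightarrow> nat \<Rightarrow> nat \<Rightarrow> (nat \<Rightarrow> real) \<Rightarrow> (nat \<Rightarrow> complex vec) \<Rightarrow> (nat \<Rightarrow> complex vec) set" where
  "PASOD1 K n N p F = {G. is_dual K n N F G \<and> AP1 K n N p F G = AP1_inf K n N p F}"

end

theory Submission imports Defs "HOL-Analysis.L2_Norm" begin

lemma hnorm_L2: "hnorm n v = L2_set (\<lambda>j. cmod (v $ j)) {..<n}"
  unfolding hnorm_def L2_set_def by simp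

lemma hnorm_nonneg: "0 \<le> hnorm n v" unfolding hnorm_L2 by simp

lemma hnorm_add: assumes "u \<in> carrier_vec n" "v \<in> carrier_vec n"
  shows "hnorm n (u + v) \<le> hnorm n u + hnorm n v"
proof -
  have "hnorm n (u + v) = L2_set (\<lambda>j. cmod (u $ j + v $ j)) {..<n}"
    unfolding hnorm_L2 using assms by (intro L2_set_cong) auto
  also have "\<dots> \<le> L2_set (\<lambda>j. cmod (u $ j) + cmod (v $ j)) {..<n}"
    by (intro L2_set_mono norm_triangle_ineq) auto
  also have "\<dots> \<le> hnorm n u + hnorm n v" unfolding hnorm_L2 by (rule L2_set_triangle_ineq)
  finally show ?thesis .
qed

lemma hnorm_smult: assumes "v \<in> carrier_vec n"
  shows "hnorm n (c \<cdot>\<^sub>v v) = cmod c * hnorm n v"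
proof -
  have "hnorm n (c \<cdot>\<^sub>v v) = L2_set (\<lambda>j. cmod c * cmod (v $ j)) {..<n}"
    unfolding hnorm_L2 using assms by (intro L2_set_cong) (auto simp: norm_mult)
  also have "\<dots> = cmod c * hnorm n v" unfolding hnorm_L2 by (simp add: L2_set_right_distrib)
  finally show ?thesis .
qed

lemma hnorm_comp_le: assumes "j < n" shows "cmod (v $ j) \<le> hnorm n v"
  unfolding hnorm_L2 using assms by (intro member_le_L2_set) auto

lemma hnorm_sq: "(hnorm n v)\<^sup>2 = (\<Sum>j<n. (cmod (v $ j))\<^sup>2)"
  unfolding hnorm_def by (simp add: sum_nonneg)

lemma hinner_self: "hinner n f f = complex_of_real ((hnorm n f)\<^sup>2)"
  unfolding hinner_def hnorm_sq of_real_sum by (rule sum.cong[OF refl]) (rule complex_norm_square[symmetric])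

lemma mat_vec_bound:
  assumes A: "A \<in> carrier_mat n n" and f: "f \<in> carrier_vec n" and h: "hnorm n f \<le> 1"
  shows "hnorm n (A *\<^sub>v f) \<le> (\<Sum>j<n. \<Sum>k<n. cmod (A $$ (j,k)))"
proof -
  have "hnorm n (A *\<^sub>v f) \<le> (\<Sum>j<n. \<bar>cmod ((A *\<^sub>v f) $ j)\<bar>)"
    unfolding hnorm_L2 by (rule L2_set_le_sum_abs)
  also have "\<dots> \<le> (\<Sum>j<n. \<Sum>k<n. cmod (A $$ (j,k)))"
  proof (rule sum_mono)
    fix j assume j: "j \<in> {..<n}"
    have "(A *\<^sub>v f) $ j = (\<Sum>k<n. A $$ (j,k) * f $ k)"
      using A f j by (auto simp: scalar_prod_def lessThan_atLeast0 intro!: sum.cong)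
    hence "cmod ((A *\<^sub>v f) $ j) \<le> (\<Sum>k<n. cmod (A $$ (j,k)) * cmod (f $ k))"
      by (auto intro!: order_trans[OF norm_sum] simp: norm_mult)
    also have "\<dots> \<le> (\<Sum>k<n. cmod (A $$ (j,k)))"
    proof (rule sum_mono)
      fix k assume k: "k \<in> {..<n}"
      have "cmod (f $ k) \<le> 1" using hnorm_comp_le[of k n f] k h by auto
      thus "cmod (A $$ (j,k)) * cmod (f $ k) \<le> cmod (A $$ (j,k))"
        by (intro mult_right_le_one_le) auto
    qed
    finally show "\<bar>cmod ((A *\<^sub>v f) $ j)\<bar> \<le> (\<Sum>k<n. cmod (A $$ (j,k)))" by simp
  qed
  finally show ?thesis .
qed



lemma rank1_spec:
  fixes q :: complex and g f :: "complex vec"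
  assumes n: "n > 0" and g: "g \<in> carrier_vec n" and f: "f \<in> carrier_vec n"
  defines "M \<equiv> mat n n (\<lambda>(j,k). q * g $ j * cnj (f $ k))"
  defines "tr \<equiv> q * (\<Sum>j<n. g $ j * cnj (f $ j))"
  shows "spectral_radius M = cmod tr"
proof -
  have M: "M \<in> carrier_mat n n" unfolding M_def by simp
  have Mv: "M *\<^sub>v v = (q * (\<Sum>k<n. cnj (f $ k) * v $ k)) \<cdot>\<^sub>v g" if v: "v \<in> carrier_vec n" for v
  proof (rule eq_vecI)
    fix j assume "j < dim_vec ((q * (\<Sum>k<n. cnj (f $ k) * v $ k)) \<cdot>\<^sub>v g)"
    hence j: "j < n" using g by simp
    have "(M *\<^sub>v v) $ j = (\<Sum>k<n. q * g $ j * cnj (f $ k) * v $ k)"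
      using j v unfolding M_def by (auto simp: scalar_prod_def lessThan_atLeast0 intro!: sum.cong)
    also have "\<dots> = (q * (\<Sum>k<n. cnj (f $ k) * v $ k)) * g $ j"
      unfolding sum_distrib_left sum_distrib_right by (intro sum.cong refl) (simp add: mult_ac)
    finally show "(M *\<^sub>v v) $ j = ((q * (\<Sum>k<n. cnj (f $ k) * v $ k)) \<cdot>\<^sub>v g) $ j"
      using j g by simp
  qed (use M g in simp)
  have ev: "lam = 0 \<or> lam = tr" if "lam \<in> spectrum M" for lam
  proof -
    from that obtain v where v: "v \<in> carrier_vec n" "v \<noteq> 0\<^sub>v n" "M *\<^sub>v v = lam \<cdot>\<^sub>v v"
      unfolding spectrum_def eigenvalue_def eigenvector_def using M by auto
    define c where "c = q * (\<Sum>k<n. cnj (f $ k) * v $ k)"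
    have eq: "lam \<cdot>\<^sub>v v = c \<cdot>\<^sub>v g" using v Mv c_def by simp
    show ?thesis
    proof (rule disjCI)
      assume l: "lam \<noteq> tr"
      show "lam = 0"
      proof (rule ccontr)
        assume l0: "lam \<noteq> 0"
        have vj: "v $ k = (c / lam) * g $ k" if "k < n" for k
        proof -
          have "lam * v $ k = c * g $ k" using arg_cong[OF eq, of "\<lambda>w. w $ k"] that v g by simp
          thus ?thesis using l0 by (simp add: field_simps)
        qed
        have "(\<Sum>k<n. cnj (f $ k) * v $ k) = (\<Sum>k<n. cnj (f $ k) * ((c / lam) * g $ k))"
          by (intro sum.cong refl) (simp add: vj)
        hence "c = q * (\<Sum>k<n. cnj (f $ k) * ((c / lam) * g $ k))" unfolding c_def by simp
        also have "\<dots> = (c / lam) * tr" unfolding tr_def sum_distrib_left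
          by (intro sum.cong refl) (simp add: mult_ac)
        finally have ceq: "c = (c / lam) * tr" .
        have "c \<noteq> 0"
        proof
          assume "c = 0"
          hence "\<forall>k<n. v $ k = 0" using vj by simp
          hence "v = 0\<^sub>v n" using v by (intro eq_vecI) auto
          thus False using v by simp
        qed
        have "c * lam = ((c / lam) * tr) * lam" using ceq by simp
        also have "\<dots> = c * tr" using l0 by simp
        finally have "lam = tr" using \<open>c \<noteq> 0\<close> by simp
        thus False using l by simp
      qed
    qed
  qed
  have srmem: "spectral_radius M \<in> norm ` spectrum M" and srle: "\<And>a. a \<in> norm ` spectrum M \<Longrightarrow> a \<le> spectral_radius M"
    using spectral_radius_mem_max[OF M n] by auto
  show ?thesis
  proof (cases "tr = 0")
    case True
    from srmem ev show ?thesis using True by auto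
  next
    case False
    have "g \<noteq> 0\<^sub>v n" using False unfolding tr_def by auto
    moreover have "M *\<^sub>v g = tr \<cdot>\<^sub>v g"
      using Mv[OF g] unfolding tr_def by (simp add: mult_ac)
    ultimately have "tr \<in> spectrum M"
      unfolding spectrum_def eigenvalue_def eigenvector_def using M g by auto
    hence "cmod tr \<le> spectral_radius M" using srle by auto
    moreover have "spectral_radius M \<le> cmod tr"
    proof -
      from srmem obtain x where x: "x \<in> spectrum M" "spectral_radius M = cmod x" by auto
      from ev[OF x(1)] x(2) show ?thesis by auto
    qed
    ultimately show ?thesis by simp
  qed
qed


lemma hinner_comb:
  assumes "u \<in> carrier_vec n" "v \<in> carrier_vec n"
  shows "hinner n f (complex_of_real a \<cdot>\<^sub>v u + complex_of_real b \<cdot>\<^sub>v v)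
       = complex_of_real a * hinner n f u + complex_of_real b * hinner n f v"
proof -
  have "hinner n f (complex_of_real a \<cdot>\<^sub>v u + complex_of_real b \<cdot>\<^sub>v v)
     = (\<Sum>j<n. complex_of_real a * (f $ j * cnj (u $ j)) + complex_of_real b * (f $ j * cnj (v $ j)))"
    unfolding hinner_def using assms by (intro sum.cong refl) (simp add: algebra_simps)
  also have "\<dots> = complex_of_real a * hinner n f u + complex_of_real b * hinner n f v"
    unfolding hinner_def by (simp add: sum.distrib sum_distrib_left)
  finally show ?thesis .
qed

lemma hinner_vsum:
  assumes "finite I" "\<And>i. i \<in> I \<Longrightarrow> v i \<in> carrier_vec n"
  shows "hinner n f (vsum n I (\<lambda>i. c i \<cdot>\<^sub>v v i)) = (\<Sum>i\<in>I. cnj (c i) * hinner n f (v i))"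
proof -
  have vv: "(c i \<cdot>\<^sub>v v i) $ j = c i * v i $ j" if "i \<in> I" "j < n" for i j
    using assms(2)[OF that(1)] that(2) by auto
  have "hinner n f (vsum n I (\<lambda>i. c i \<cdot>\<^sub>v v i)) = (\<Sum>j<n. \<Sum>i\<in>I. f $ j * cnj (c i * v i $ j))"
    unfolding hinner_def vsum_def
    by (intro sum.cong refl) (simp add: sum_distrib_left vv)
  also have "\<dots> = (\<Sum>i\<in>I. \<Sum>j<n. f $ j * cnj (c i * v i $ j))" by (rule sum.swap)
  also have "\<dots> = (\<Sum>i\<in>I. cnj (c i) * hinner n f (v i))"
    unfolding hinner_def by (auto simp: sum_distrib_left mult_ac intro!: sum.cong)
  finally show ?thesis .
qed

lemma dual_lower:
  assumes fin: "finite I" and Fc: "\<And>i. i \<in> I \<Longrightarrow> F i \<in> carrier_vec n"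
    and rec: "f = vsum n I (\<lambda>i. hinner n f (G i) \<cdot>\<^sub>v F i)"
    and BF: "BF > 0" and up: "(\<Sum>i\<in>I. (cmod (hinner n f (F i)))\<^sup>2) \<le> BF * (hnorm n f)\<^sup>2"
  shows "(1 / BF) * (hnorm n f)\<^sup>2 \<le> (\<Sum>i\<in>I. (cmod (hinner n f (G i)))\<^sup>2)"
proof -
  define h where "h = hnorm n f"
  define SG where "SG = (\<Sum>i\<in>I. (cmod (hinner n f (G i)))\<^sup>2)"
  define SF where "SF = (\<Sum>i\<in>I. (cmod (hinner n f (F i)))\<^sup>2)"
  have h0: "h \<ge> 0" unfolding h_def by (rule hnorm_nonneg)
  have SG0: "SG \<ge> 0" unfolding SG_def by (simp add: sum_nonneg)
  have SF0: "SF \<ge> 0" unfolding SF_def by (simp add: sum_nonneg)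
  have "h\<^sup>2 = cmod (hinner n f f)" unfolding h_def hinner_self norm_of_real by simp
  also have "hinner n f f = (\<Sum>i\<in>I. cnj (hinner n f (G i)) * hinner n f (F i))"
    by (subst (2) rec) (rule hinner_vsum[OF fin Fc])
  also have "cmod \<dots> \<le> (\<Sum>i\<in>I. \<bar>cmod (hinner n f (G i))\<bar> * \<bar>cmod (hinner n f (F i))\<bar>)"
    by (rule order_trans[OF norm_sum]) (simp add: norm_mult)
  also have "\<dots> \<le> L2_set (\<lambda>i. cmod (hinner n f (G i))) I * L2_set (\<lambda>i. cmod (hinner n f (F i))) I"
    by (rule L2_set_mult_ineq)
  also have "\<dots> = sqrt SG * sqrt SF" unfolding SG_def SF_def L2_set_def by simp
  finally have A: "h\<^sup>2 \<le> sqrt SG * sqrt SF" .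
  have "sqrt SF \<le> sqrt (BF * h\<^sup>2)" using up unfolding SF_def h_def by (rule real_sqrt_le_mono)
  also have "\<dots> = sqrt BF * h" using h0 by (simp add: real_sqrt_mult)
  finally have "sqrt SF \<le> sqrt BF * h" .
  hence "h\<^sup>2 \<le> sqrt SG * (sqrt BF * h)" using A SG0 by (meson mult_left_mono order_trans real_sqrt_ge_zero)
  hence B: "h\<^sup>2 \<le> (sqrt SG * sqrt BF) * h" by (simp add: mult_ac)
  have "h\<^sup>2 \<le> SG * BF"
  proof (cases "h = 0")
    case True thus ?thesis using SG0 BF by simp
  next
    case False
    hence hp: "h > 0" using h0 by simp
    from B have "h \<le> sqrt SG * sqrt BF" using hp by (simp add: power2_eq_square)
    hence "h\<^sup>2 \<le> (sqrt SG * sqrt BF)\<^sup>2" using h0 by (simp add: power_mono)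
    also have "\<dots> = SG * BF" using SG0 BF by (simp add: power_mult_distrib)
    finally show ?thesis .
  qed
  hence "(1 / BF) * h\<^sup>2 \<le> SG" using BF by (simp add: pos_divide_le_eq)
  thus ?thesis unfolding SG_def h_def .
qed


lemma hspace_carrier: "f \<in> hspace K n \<Longrightarrow> f \<in> carrier_vec n"
  unfolding hspace_def by auto

lemma zero_hspace: "0 \<in> K \<Longrightarrow> 0\<^sub>v n \<in> hspace K n"
  unfolding hspace_def by auto

lemma hnorm_zero: "hnorm n (0\<^sub>v n) = 0"
  unfolding hnorm_def by simp

lemma op_norm_bdd:
  assumes A: "A \<in> carrier_mat n n"
  shows "bdd_above {hnorm n (A *\<^sub>v f) | f. f \<in> hspace K n \<and> hnorm n f \<le> 1}"
  by (rule bdd_aboveI[where M = "\<Sum>j<n. \<Sum>k<n. cmod (A $$ (j,k))"])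
     (auto intro!: mat_vec_bound[OF A] hspace_carrier)

lemma op_norm_ge:
  assumes A: "A \<in> carrier_mat n n" and f: "f \<in> hspace K n" "hnorm n f \<le> 1"
  shows "hnorm n (A *\<^sub>v f) \<le> op_norm K n A"
  unfolding op_norm_def by (rule cSup_upper[OF _ op_norm_bdd[OF A]]) (use f in auto)

lemma op_norm_nonneg:
  assumes K: "0 \<in> K" and A: "A \<in> carrier_mat n n"
  shows "0 \<le> op_norm K n A"
  using op_norm_ge[OF A zero_hspace[OF K, of n]] hnorm_nonneg[of n "A *\<^sub>v 0\<^sub>v n"]
  by (simp add: hnorm_zero)

lemma comb_mat_vec:
  assumes A: "A \<in> carrier_mat n n" and B: "B \<in> carrier_mat n n" and f: "f \<in> carrier_vec n"
  shows "(a \<cdot>\<^sub>m A + b \<cdot>\<^sub>m B) *\<^sub>v f = a \<cdot>\<^sub>v (A *\<^sub>v f) + b \<cdot>\<^sub>v (B *\<^sub>v f)"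
proof (rule eq_vecI)
  fix j assume "j < dim_vec (a \<cdot>\<^sub>v (A *\<^sub>v f) + b \<cdot>\<^sub>v (B *\<^sub>v f))"
  hence j: "j < n" using B by simp
  have "((a \<cdot>\<^sub>m A + b \<cdot>\<^sub>m B) *\<^sub>v f) $ j = (\<Sum>k<n. (a * A $$ (j,k) + b * B $$ (j,k)) * f $ k)"
    using A B f j by (auto simp: scalar_prod_def lessThan_atLeast0 intro!: sum.cong)
  also have "\<dots> = a * (\<Sum>k<n. A $$ (j,k) * f $ k) + b * (\<Sum>k<n. B $$ (j,k) * f $ k)"
    by (simp add: sum.distrib sum_distrib_left algebra_simps)
  also have "\<dots> = (a \<cdot>\<^sub>v (A *\<^sub>v f) + b \<cdot>\<^sub>v (B *\<^sub>v f)) $ j"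
    using A B f j by (auto simp: scalar_prod_def lessThan_atLeast0)
  finally show "((a \<cdot>\<^sub>m A + b \<cdot>\<^sub>m B) *\<^sub>v f) $ j = (a \<cdot>\<^sub>v (A *\<^sub>v f) + b \<cdot>\<^sub>v (B *\<^sub>v f)) $ j" .
qed (use A B in auto)

lemma op_norm_conv:
  assumes K: "0 \<in> K" and A: "A \<in> carrier_mat n n" and B: "B \<in> carrier_mat n n"
    and t: "0 \<le> t" "t \<le> 1"
  shows "op_norm K n (complex_of_real t \<cdot>\<^sub>m A + complex_of_real (1 - t) \<cdot>\<^sub>m B)
         \<le> t * op_norm K n A + (1 - t) * op_norm K n B"
  unfolding op_norm_def[of K n "complex_of_real t \<cdot>\<^sub>m A + complex_of_real (1 - t) \<cdot>\<^sub>m B"]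
proof (rule cSup_least)
  show "{hnorm n ((complex_of_real t \<cdot>\<^sub>m A + complex_of_real (1 - t) \<cdot>\<^sub>m B) *\<^sub>v f) |f.
          f \<in> hspace K n \<and> hnorm n f \<le> 1} \<noteq> {}"
    using zero_hspace[OF K, of n] hnorm_zero[of n] by auto
  fix x assume "x \<in> {hnorm n ((complex_of_real t \<cdot>\<^sub>m A + complex_of_real (1 - t) \<cdot>\<^sub>m B) *\<^sub>v f) |f.
          f \<in> hspace K n \<and> hnorm n f \<le> 1}"
  then obtain f where f: "f \<in> hspace K n" "hnorm n f \<le> 1"
    and x: "x = hnorm n ((complex_of_real t \<cdot>\<^sub>m A + complex_of_real (1 - t) \<cdot>\<^sub>m B) *\<^sub>v f)" by auto
  have fc: "f \<in> carrier_vec n" using f hspace_carrier by auto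
  have "x = hnorm n (complex_of_real t \<cdot>\<^sub>v (A *\<^sub>v f) + complex_of_real (1 - t) \<cdot>\<^sub>v (B *\<^sub>v f))"
    unfolding x comb_mat_vec[OF A B fc] ..
  also have "\<dots> \<le> hnorm n (complex_of_real t \<cdot>\<^sub>v (A *\<^sub>v f)) + hnorm n (complex_of_real (1 - t) \<cdot>\<^sub>v (B *\<^sub>v f))"
    by (rule hnorm_add) (use A B fc in auto)
  also have "\<dots> = t * hnorm n (A *\<^sub>v f) + (1 - t) * hnorm n (B *\<^sub>v f)"
    using A B fc t by (simp add: hnorm_smult del: of_real_diff)
  also have "\<dots> \<le> t * op_norm K n A + (1 - t) * op_norm K n B"
    using op_norm_ge[OF A f] op_norm_ge[OF B f] t by (intro add_mono mult_left_mono) auto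
  finally show "x \<le> t * op_norm K n A + (1 - t) * op_norm K n B" .
qed

lemma err_op_single:
  "err_op n N p {i} F G = mat n n (\<lambda>(j,k). complex_of_real (weight n N p i) * G i $ j * cnj (F i $ k))"
  unfolding err_op_def by simp

lemma err_op_carrier: "err_op n N p L F G \<in> carrier_mat n n"
  unfolding err_op_def by simp

lemma err_op_comb:
  assumes "U i \<in> carrier_vec n" "W i \<in> carrier_vec n"
  shows "err_op n N p {i} F (\<lambda>i. a \<cdot>\<^sub>v U i + b \<cdot>\<^sub>v W i)
       = a \<cdot>\<^sub>m err_op n N p {i} F U + b \<cdot>\<^sub>m err_op n N p {i} F W"
  by (rule eq_matI) (use assms in \<open>auto simp: err_op_single algebra_simps\<close>)

definition hv :: "complex set \<Rightarrow> nat \<Rightarrow> nat \<Rightarrow> (nat \<Rightarrow> real) \<Rightarrow> (nat \<Rightarrow> complex vec) \<Rightarrow> nat set \<Rightarrow> (nat \<Rightarrow> complex vec) \<Rightarrow> real" where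
  "hv K n N p F L X = (op_norm K n (err_op n N p L F X) + spectral_radius (err_op n N p L F X)) / 2"

lemma AP1_alt: "AP1 K n N p F X = Max ((\<lambda>L. hv K n N p F L X) ` {L. L \<subseteq> {1..N} \<and> card L = 1})"
  unfolding AP1_def hv_def by (intro arg_cong[where f=Max]) blast

lemma sr_single:
  assumes "n > 0" "X i \<in> carrier_vec n" "F i \<in> carrier_vec n"
  shows "spectral_radius (err_op n N p {i} F X)
       = cmod (complex_of_real (weight n N p i) * (\<Sum>j<n. X i $ j * cnj (F i $ j)))"
  unfolding err_op_single by (rule rank1_spec[OF assms])

lemma hv_nonneg:
  assumes "0 \<in> K" "n > 0" "X i \<in> carrier_vec n" "F i \<in> carrier_vec n"
  shows "0 \<le> hv K n N p F {i} X"
  unfolding hv_def sr_single[where X=X and i=i and F=F, OF assms(2-4)]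
  using op_norm_nonneg[OF assms(1) err_op_carrier] by simp

lemma hv_conv:
  assumes K: "0 \<in> K" and n: "n > 0" and t: "0 \<le> t" "t \<le> 1"
    and c: "U i \<in> carrier_vec n" "W i \<in> carrier_vec n" "F i \<in> carrier_vec n"
  shows "hv K n N p F {i} (\<lambda>i. complex_of_real t \<cdot>\<^sub>v U i + complex_of_real (1 - t) \<cdot>\<^sub>v W i)
     \<le> t * hv K n N p F {i} U + (1 - t) * hv K n N p F {i} W"
proof -
  define G where "G = (\<lambda>i. complex_of_real t \<cdot>\<^sub>v U i + complex_of_real (1 - t) \<cdot>\<^sub>v W i)"
  have Gc: "G i \<in> carrier_vec n" using c unfolding G_def by simp
  have op: "op_norm K n (err_op n N p {i} F G)
      \<le> t * op_norm K n (err_op n N p {i} F U) + (1 - t) * op_norm K n (err_op n N p {i} F W)"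
    unfolding G_def err_op_comb[where U=U and W=W and i=i, OF c(1,2)] by (rule op_norm_conv[OF K err_op_carrier err_op_carrier t])
  define q where "q = complex_of_real (weight n N p i)"
  define S1 where "S1 = (\<Sum>j<n. U i $ j * cnj (F i $ j))"
  define S2 where "S2 = (\<Sum>j<n. W i $ j * cnj (F i $ j))"
  have "(\<Sum>j<n. G i $ j * cnj (F i $ j)) = (\<Sum>j<n. complex_of_real t * (U i $ j * cnj (F i $ j)) + complex_of_real (1 - t) * (W i $ j * cnj (F i $ j)))"
    using c unfolding G_def by (intro sum.cong refl) (simp add: algebra_simps)
  also have "\<dots> = complex_of_real t * S1 + complex_of_real (1 - t) * S2"
    unfolding S1_def S2_def by (simp add: sum.distrib sum_distrib_left)
  finally have SG: "(\<Sum>j<n. G i $ j * cnj (F i $ j)) = complex_of_real t * S1 + complex_of_real (1 - t) * S2" .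
  have "cmod (q * (complex_of_real t * S1 + complex_of_real (1 - t) * S2))
      = cmod (complex_of_real t * (q * S1) + complex_of_real (1 - t) * (q * S2))"
    by (simp add: algebra_simps)
  also have "\<dots> \<le> cmod (complex_of_real t * (q * S1)) + cmod (complex_of_real (1 - t) * (q * S2))"
    by (rule norm_triangle_ineq)
  also have "\<dots> = t * cmod (q * S1) + (1 - t) * cmod (q * S2)"
    using t by (simp add: norm_mult del: of_real_diff)
  finally have sr: "spectral_radius (err_op n N p {i} F G)
     \<le> t * spectral_radius (err_op n N p {i} F U) + (1 - t) * spectral_radius (err_op n N p {i} F W)"
    unfolding sr_single[where X=G and i=i and F=F, OF n Gc c(3)] sr_single[where X=U and i=i and F=F, OF n c(1,3)] sr_single[where X=W and i=i and F=F, OF n c(2,3)] SG q_def S1_def S2_def .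
  show ?thesis unfolding G_def[symmetric] hv_def using op sr by (simp add: field_simps)
qed


lemma vsum_conv:
  assumes c: "\<And>i. i \<in> I \<Longrightarrow> u i \<in> carrier_vec n \<and> w i \<in> carrier_vec n \<and> v i \<in> carrier_vec n"
    and vj: "\<And>i j. i \<in> I \<Longrightarrow> j < n \<Longrightarrow> v i $ j = a * u i $ j + b * w i $ j"
    and fu: "f = vsum n I u" and fw: "f = vsum n I w" and ab: "a + b = 1"
  shows "f = vsum n I v"
proof (rule eq_vecI)
  show "dim_vec f = dim_vec (vsum n I v)" using fu unfolding vsum_def by simp
  fix j assume "j < dim_vec (vsum n I v)"
  hence j: "j < n" unfolding vsum_def by simp
  have "vsum n I v $ j = (\<Sum>i\<in>I. a * u i $ j + b * w i $ j)"
    unfolding vsum_def using j vj by simp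
  also have "\<dots> = a * vsum n I u $ j + b * vsum n I w $ j"
    unfolding vsum_def using j by (simp add: sum.distrib sum_distrib_left)
  also have "\<dots> = a * f $ j + b * f $ j" using fu fw by simp
  also have "\<dots> = f $ j" using ab by (simp add: distrib_right[symmetric])
  finally show "f $ j = vsum n I v $ j" by simp
qed

lemma sq_comb_le:
  fixes x y :: complex and t :: real
  assumes "0 \<le> t" "t \<le> 1"
  shows "(cmod (complex_of_real t * x + complex_of_real (1 - t) * y))\<^sup>2 \<le> 2 * (cmod x)\<^sup>2 + 2 * (cmod y)\<^sup>2"
proof -
  have "cmod (complex_of_real t * x + complex_of_real (1 - t) * y) \<le> t * cmod x + (1 - t) * cmod y"
    using assms by (rule_tac order_trans[OF norm_triangle_ineq]) (simp add: norm_mult del: of_real_diff)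
  also have "\<dots> \<le> cmod x + cmod y"
    using assms by (intro add_mono) (auto intro: mult_left_le_one_le)
  finally have A: "cmod (complex_of_real t * x + complex_of_real (1 - t) * y) \<le> cmod x + cmod y" .
  have "(cmod (complex_of_real t * x + complex_of_real (1 - t) * y))\<^sup>2 \<le> (cmod x + cmod y)\<^sup>2"
    using A by (intro power_mono) auto
  also have "\<dots> \<le> 2 * (cmod x)\<^sup>2 + 2 * (cmod y)\<^sup>2"
  proof -
    have "0 \<le> (cmod x - cmod y)\<^sup>2" by simp
    thus ?thesis unfolding power2_sum power2_diff by linarith
  qed
  finally show ?thesis .
qed

theorem theorem3p1:
  fixes K :: "complex set" and n N :: nat and p :: "nat \<Rightarrow> real" and F :: "nat \<Rightarrow> complex vec"
  assumes "K = \<real> \<or> K = UNIV"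
    and "is_frame K n N F"
    and "is_prob_seq N p"
    and "G1 \<in> PASOD1 K n N p F" and "G2 \<in> PASOD1 K n N p F"
    and "0 \<le> t" and "t \<le> (1::real)"
  shows "(\<lambda>i. complex_of_real t \<cdot>\<^sub>v G1 i + complex_of_real (1 - t) \<cdot>\<^sub>v G2 i) \<in> PASOD1 K n N p F"
proof -
  note t = assms(6,7)
  have K0: "0 \<in> K" using assms(1) by auto
  have Kcl: "complex_of_real t * a + complex_of_real (1 - t) * b \<in> K" if "a \<in> K" "b \<in> K" for a b
    using assms(1) that by (auto intro!: Reals_add Reals_mult)
  define G where "G = (\<lambda>i. complex_of_real t \<cdot>\<^sub>v G1 i + complex_of_real (1 - t) \<cdot>\<^sub>v G2 i)"
  have d1: "is_dual K n N F G1" and e1: "AP1 K n N p F G1 = AP1_inf K n N p F"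
    using assms(4) unfolding PASOD1_def by auto
  have d2: "is_dual K n N F G2" and e2: "AP1 K n N p F G2 = AP1_inf K n N p F"
    using assms(5) unfolding PASOD1_def by auto
  have fr1: "is_frame K n N G1" and fr2: "is_frame K n N G2" using d1 d2 unfolding is_dual_def by auto
  have G1h: "G1 i \<in> hspace K n" if "i \<in> {1..N}" for i using fr1 that unfolding is_frame_def by auto
  have G2h: "G2 i \<in> hspace K n" if "i \<in> {1..N}" for i using fr2 that unfolding is_frame_def by auto
  have Fh: "F i \<in> hspace K n" if "i \<in> {1..N}" for i using assms(2) that unfolding is_frame_def by auto
  have G1c: "G1 i \<in> carrier_vec n" if "i \<in> {1..N}" for i using G1h[OF that] hspace_carrier by auto
  have G2c: "G2 i \<in> carrier_vec n" if "i \<in> {1..N}" for i using G2h[OF that] hspace_carrier by auto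
  have Fc: "F i \<in> carrier_vec n" if "i \<in> {1..N}" for i using Fh[OF that] hspace_carrier by auto
  have Gc: "G i \<in> carrier_vec n" if "i \<in> {1..N}" for i using G1c[OF that] G2c[OF that] unfolding G_def by simp
  have Gj: "G i $ j = complex_of_real t * G1 i $ j + complex_of_real (1 - t) * G2 i $ j"
    if "i \<in> {1..N}" "j < n" for i j using G1c[OF that(1)] G2c[OF that(1)] that(2) unfolding G_def by simp
  have Gh: "G i \<in> hspace K n" if "i \<in> {1..N}" for i
    using Gc[OF that] G1h[OF that] G2h[OF that] Gj[OF that] Kcl unfolding hspace_def by auto
  have Gin: "hinner n f (G i) = complex_of_real t * hinner n f (G1 i) + complex_of_real (1 - t) * hinner n f (G2 i)"
    if "i \<in> {1..N}" for f i unfolding G_def by (rule hinner_comb[OF G1c[OF that] G2c[OF that]])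
  have recA: "f = vsum n {1..N} (\<lambda>i. hinner n f (F i) \<cdot>\<^sub>v G i)" if f: "f \<in> hspace K n" for f
  proof (rule vsum_conv[where u="\<lambda>i. hinner n f (F i) \<cdot>\<^sub>v G1 i" and w="\<lambda>i. hinner n f (F i) \<cdot>\<^sub>v G2 i"
        and a="complex_of_real t" and b="complex_of_real (1 - t)"])
    show "f = vsum n {1..N} (\<lambda>i. hinner n f (F i) \<cdot>\<^sub>v G1 i)" using d1 f unfolding is_dual_def by blast
    show "f = vsum n {1..N} (\<lambda>i. hinner n f (F i) \<cdot>\<^sub>v G2 i)" using d2 f unfolding is_dual_def by blast
  next
    fix i j assume i: "i \<in> {1..N}" and j: "j < n"
    show "(hinner n f (F i) \<cdot>\<^sub>v G i) $ j = complex_of_real t * (hinner n f (F i) \<cdot>\<^sub>v G1 i) $ j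
        + complex_of_real (1 - t) * (hinner n f (F i) \<cdot>\<^sub>v G2 i) $ j"
      using G1c[OF i] G2c[OF i] Gc[OF i] j by (simp add: Gj[OF i j] algebra_simps)
  qed (use G1c G2c Gc in auto)
  have recB: "f = vsum n {1..N} (\<lambda>i. hinner n f (G i) \<cdot>\<^sub>v F i)" if f: "f \<in> hspace K n" for f
  proof (rule vsum_conv[where u="\<lambda>i. hinner n f (G1 i) \<cdot>\<^sub>v F i" and w="\<lambda>i. hinner n f (G2 i) \<cdot>\<^sub>v F i"
        and a="complex_of_real t" and b="complex_of_real (1 - t)"])
    show "f = vsum n {1..N} (\<lambda>i. hinner n f (G1 i) \<cdot>\<^sub>v F i)" using d1 f unfolding is_dual_def by blast
    show "f = vsum n {1..N} (\<lambda>i. hinner n f (G2 i) \<cdot>\<^sub>v F i)" using d2 f unfolding is_dual_def by blast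
  next
    fix i j assume i: "i \<in> {1..N}" and j: "j < n"
    show "(hinner n f (G i) \<cdot>\<^sub>v F i) $ j = complex_of_real t * (hinner n f (G1 i) \<cdot>\<^sub>v F i) $ j
        + complex_of_real (1 - t) * (hinner n f (G2 i) \<cdot>\<^sub>v F i) $ j"
      using Fc[OF i] j by (simp add: Gin[OF i] algebra_simps)
  qed (use Fc in auto)
  obtain AF BF where BF: "BF > 0" and upF: "\<And>f. f \<in> hspace K n \<Longrightarrow>
      (\<Sum>i=1..N. (cmod (hinner n f (F i)))\<^sup>2) \<le> BF * (hnorm n f)\<^sup>2"
    using assms(2) unfolding is_frame_def by blast
  obtain B1 where B1: "B1 > 0" and up1: "\<And>f. f \<in> hspace K n \<Longrightarrow>
      (\<Sum>i=1..N. (cmod (hinner n f (G1 i)))\<^sup>2) \<le> B1 * (hnorm n f)\<^sup>2"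
    using fr1 unfolding is_frame_def by blast
  obtain B2 where B2: "B2 > 0" and up2: "\<And>f. f \<in> hspace K n \<Longrightarrow>
      (\<Sum>i=1..N. (cmod (hinner n f (G2 i)))\<^sup>2) \<le> B2 * (hnorm n f)\<^sup>2"
    using fr2 unfolding is_frame_def by blast
  have lowG: "1 / BF * (hnorm n f)\<^sup>2 \<le> (\<Sum>i = 1..N. (cmod (hinner n f (G i)))\<^sup>2)"
    if f: "f \<in> hspace K n" for f
    by (rule dual_lower[OF _ Fc recB[OF f] BF upF[OF f]]) auto
  have upG: "(\<Sum>i = 1..N. (cmod (hinner n f (G i)))\<^sup>2) \<le> (2 * B1 + 2 * B2) * (hnorm n f)\<^sup>2"
    if f: "f \<in> hspace K n" for f
  proof -
    have "(\<Sum>i = 1..N. (cmod (hinner n f (G i)))\<^sup>2)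
        \<le> (\<Sum>i = 1..N. 2 * (cmod (hinner n f (G1 i)))\<^sup>2 + 2 * (cmod (hinner n f (G2 i)))\<^sup>2)"
    proof (rule sum_mono)
      fix i assume i: "i \<in> {1..N}"
      show "(cmod (hinner n f (G i)))\<^sup>2 \<le> 2 * (cmod (hinner n f (G1 i)))\<^sup>2 + 2 * (cmod (hinner n f (G2 i)))\<^sup>2"
        unfolding Gin[OF i] by (rule sq_comb_le[OF t])
    qed
    also have "\<dots> = 2 * (\<Sum>i = 1..N. (cmod (hinner n f (G1 i)))\<^sup>2) + 2 * (\<Sum>i = 1..N. (cmod (hinner n f (G2 i)))\<^sup>2)"
      by (simp add: sum.distrib sum_distrib_left)
    also have "\<dots> \<le> 2 * (B1 * (hnorm n f)\<^sup>2) + 2 * (B2 * (hnorm n f)\<^sup>2)"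
      using up1[OF f] up2[OF f] by simp
    also have "\<dots> = (2 * B1 + 2 * B2) * (hnorm n f)\<^sup>2" by (simp add: algebra_simps)
    finally show ?thesis .
  qed
  have pos: "0 < 1 / BF" "0 < 2 * B1 + 2 * B2" using BF B1 B2 by auto
  have frG: "is_frame K n N G"
    unfolding is_frame_def using Gh lowG upG pos by blast
  have dG: "is_dual K n N F G" unfolding is_dual_def using frG recA recB by blast
  have N1: "N \<ge> 1"
  proof (rule ccontr)
    assume "\<not> N \<ge> 1" hence "N = 0" by simp
    thus False using assms(3) unfolding is_prob_seq_def by simp
  qed
  define LS where "LS = {L. L \<subseteq> {1..N} \<and> card L = 1}"
  have LSfin: "finite LS" unfolding LS_def by (rule finite_subset[of _ "Pow {1..N}"]) auto
  have LSne: "{1} \<in> LS" unfolding LS_def using N1 by auto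
  have LSsing: "\<exists>i\<in>{1..N}. L = {i}" if "L \<in> LS" for L
  proof -
    have "L \<subseteq> {1..N}" "card L = 1" using that unfolding LS_def by auto
    then obtain x where "L = {x}" by (metis card_1_singletonE)
    thus ?thesis using \<open>L \<subseteq> {1..N}\<close> by auto
  qed
  have AP1G: "AP1 K n N p F X = Max ((\<lambda>L. hv K n N p F L X) ` LS)" for X
    unfolding AP1_alt LS_def ..
  have APeq: "AP1 K n N p F G = AP1_inf K n N p F"
  proof (cases "n = 0")
    case True
    have "err_op n N p L F G = err_op n N p L F G1" for L
      by (rule eq_matI) (auto simp: err_op_def True)
    hence "AP1 K n N p F G = AP1 K n N p F G1" unfolding AP1_def by simp
    thus ?thesis using e1 by simp
  next
    case False
    hence n: "n > 0" by simp
    have le: "AP1 K n N p F G \<le> AP1_inf K n N p F"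
      unfolding AP1G
    proof (rule Max.boundedI)
      show "finite ((\<lambda>L. hv K n N p F L G) ` LS)" using LSfin by simp
      show "(\<lambda>L. hv K n N p F L G) ` LS \<noteq> {}" using LSne by auto
      fix a assume "a \<in> (\<lambda>L. hv K n N p F L G) ` LS"
      then obtain L where L: "L \<in> LS" and a: "a = hv K n N p F L G" by auto
      obtain i where i: "i \<in> {1..N}" and Li: "L = {i}" using LSsing[OF L] by auto
      have "a \<le> t * hv K n N p F {i} G1 + (1 - t) * hv K n N p F {i} G2"
        unfolding a Li G_def by (rule hv_conv[where U=G1 and W=G2 and i=i and F=F, OF K0 n t G1c[OF i] G2c[OF i] Fc[OF i]])
      also have "\<dots> \<le> t * AP1 K n N p F G1 + (1 - t) * AP1 K n N p F G2"
        unfolding AP1G using L Li LSfin t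
        by (intro add_mono mult_left_mono Max_ge) auto
      also have "\<dots> = AP1_inf K n N p F" unfolding e1 e2 by (simp add: algebra_simps)
      finally show "a \<le> AP1_inf K n N p F" .
    qed
    have ge: "AP1_inf K n N p F \<le> AP1 K n N p F G"
      unfolding AP1_inf_def
    proof (rule cInf_lower)
      show "AP1 K n N p F G \<in> {AP1 K n N p F X |X. is_dual K n N F X}" using dG by auto
      show "bdd_below {AP1 K n N p F X |X. is_dual K n N F X}"
      proof (rule bdd_belowI[where m=0])
        fix x assume "x \<in> {AP1 K n N p F X |X. is_dual K n N F X}"
        then obtain X where X: "is_dual K n N F X" and x: "x = AP1 K n N p F X" by auto
        have "X 1 \<in> hspace K n" using X N1 unfolding is_dual_def is_frame_def by auto
        hence "X 1 \<in> carrier_vec n" by (rule hspace_carrier)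
        hence "0 \<le> hv K n N p F {1} X" by (rule hv_nonneg[where X=X and i=1 and F=F, OF K0 n _ Fc]) (use N1 in auto)
        also have "\<dots> \<le> AP1 K n N p F X" unfolding AP1G using LSne LSfin by (intro Max_ge) auto
        finally show "0 \<le> x" unfolding x .
      qed
    qed
    show ?thesis using le ge by simp
  qed
  show ?thesis unfolding G_def[symmetric] PASOD1_def using dG APeq by auto
qed

end
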